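(* Let $\mathcal{A}$ be a line arrangement in $\mathbb{P}^2_{\mathbb{C}}$ which is not of class $\mathcal{C}_{\le 3}$ of simple type. Then there exist six distinct lines $H_1,\dots,H_6\in\mathcal{A}$ such that $H_1\cap H_2\cap H_3\ne\emptyset$, $H_4\cap H_5\cap H_6\ne\emptyset$, and $(H_1\cup H_2\cup H_3)\cap(H_4\cup H_5\cup H_6)$ consists of exactly $9$ points.
   Context: $\operatorname{mult}(\mathcal{A})$ is the set of points on at least three lines of $\mathcal{A}$. $\mathcal{A}$ is of type $\mathcal{C}_k$ if $k$ is the minimal number of lines of $\mathcal{A}$ whose union contains $\operatorname{mult}(\mathcal{A})$. "$\mathcal{C}_{\le 3}$ of simple type" means of type $\mathcal{C}_0,\mathcal{C}_1,\mathcal{C}_2$, or of type $\mathcal{C}_3$ such that there exist $H_1,H_2,H_3\in\mathcal{A}$ with $\operatorname{mult}(\mathcal{A})\subset H_1\cup H_2\cup H_3$ and either (i) $H_1\cap H_2\cap H_3=\emptyset$ and exactly one multiple point lies on $H_1\setminus(H_2\cup H_3)$, or (ii) $H_1\cap H_2\cap H_3\ne\emptyset$. *)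

theory Defs
  imports "HOL-Analysis.Analysis"
begin

text \<open>Points of the complex projective plane: the complex lines through the
origin in C^3, i.e. sets of all complex multiples of a nonzero vector.\<close>

type_synonym ppoint = "(complex^3) set"

definition proj_pt :: "complex^3 \<Rightarrow> ppoint" where
  "proj_pt v = {c *s v | c. True}"

definition proj_points :: "ppoint set" where
  "proj_points = {proj_pt v | v. v \<noteq> 0}"

definition proj_line :: "complex^3 \<Rightarrow> ppoint set" where
  "proj_line a = {P \<in> proj_points. \<forall>x\<in>P. (\<Sum>i\<in>UNIV. a $ i * x $ i) = 0}"

definition is_line :: "ppoint set \<Rightarrow> bool" where
  "is_line L \<longleftrightarrow> (\<exists>a. a \<noteq> 0 \<and> L = proj_line a)"

definition line_arrangement :: "ppoint set set \<Rightarrow> bool" where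
  "line_arrangement A \<longleftrightarrow> finite A \<and> (\<forall>H\<in>A. is_line H)"

definition mult :: "ppoint set set \<Rightarrow> ppoint set" where
  "mult A = {P \<in> proj_points. 3 \<le> card {H \<in> A. P \<in> H}}"

definition cover_num :: "ppoint set set \<Rightarrow> nat" where
  "cover_num A = (LEAST k. \<exists>S \<subseteq> A. card S = k \<and> mult A \<subseteq> \<Union>S)"

definition of_type_C :: "nat \<Rightarrow> ppoint set set \<Rightarrow> bool" where
  "of_type_C k A \<longleftrightarrow> cover_num A = k"

definition C_le3_simple :: "ppoint set set \<Rightarrow> bool" where
  "C_le3_simple A \<longleftrightarrow>
     of_type_C 0 A \<or> of_type_C 1 A \<or> of_type_C 2 A \<or>
     (of_type_C 3 A \<and>
       (\<exists>H1\<in>A. \<exists>H2\<in>A. \<exists>H3\<in>A. mult A \<subseteq> H1 \<union> H2 \<union> H3 \<and>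
          ((H1 \<inter> H2 \<inter> H3 = {} \<and> card {P \<in> mult A. P \<in> H1 - (H2 \<union> H3)} = 1)
           \<or> H1 \<inter> H2 \<inter> H3 \<noteq> {})))"

end

theory Submission
  imports Defs
begin

definition dt :: "complex^3 \<Rightarrow> complex^3 \<Rightarrow> complex" where
  "dt a x = (\<Sum>i\<in>UNIV. a $ i * x $ i)"

definition cr :: "complex^3 \<Rightarrow> complex^3 \<Rightarrow> complex^3" where
  "cr a b = vector [a$2*b$3 - a$3*b$2, a$3*b$1 - a$1*b$3, a$1*b$2 - a$2*b$1]"

lemma dt3: "dt a x = a$1*x$1 + a$2*x$2 + a$3*x$3"
  by (simp add: dt_def sum_3)

lemma cr_comp: "cr a b $ 1 = a$2*b$3 - a$3*b$2" "cr a b $ 2 = a$3*b$1 - a$1*b$3"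
  "cr a b $ 3 = a$1*b$2 - a$2*b$1"
  by (simp_all add: cr_def)

lemma vec3_eq: "(v::complex^3) = w \<longleftrightarrow> v$1 = w$1 \<and> v$2 = w$2 \<and> v$3 = w$3"
  by (simp add: vec_eq_iff forall_3)

lemma vec3_zero: "(v::complex^3) = 0 \<longleftrightarrow> v$1 = 0 \<and> v$2 = 0 \<and> v$3 = 0"
  by (simp add: vec_eq_iff forall_3)

lemma dt_cr: "dt a (cr a b) = 0" "dt b (cr a b) = 0"
  by (simp_all add: dt3 cr_comp algebra_simps)

lemma cr_cr_comp: "cr (cr v w) a $ k = w$k * dt a v - v$k * dt a w"
proof -
  have "k = 1 \<or> k = 2 \<or> k = 3" using exhaust_3 by blast
  then show ?thesis by (auto simp: cr_comp dt3 algebra_simps)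
qed

lemma cr_cr: "dt a v = 0 \<Longrightarrow> dt a w = 0 \<Longrightarrow> cr (cr v w) a = 0"
  by (simp add: vec_eq_iff cr_cr_comp)

lemma cr0_par:
  assumes "a \<noteq> 0" "cr a b = 0" shows "\<exists>c. b = c *s a"
proof -
  have e: "a$2*b$3 = a$3*b$2" "a$3*b$1 = a$1*b$3" "a$1*b$2 = a$2*b$1"
    using assms(2) unfolding vec3_zero cr_comp by auto
  consider "a$1 \<noteq> 0" | "a$2 \<noteq> 0" | "a$3 \<noteq> 0" using assms(1) vec3_zero by blast
  then show ?thesis
  proof cases
    case 1
    have "b = (b$1/a$1) *s a" unfolding vec3_eq using 1 e by (auto simp: field_simps)
    then show ?thesis by blast
  next
    case 2
    have "b = (b$2/a$2) *s a" unfolding vec3_eq using 2 e by (auto simp: field_simps)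
    then show ?thesis by blast
  next
    case 3
    have "b = (b$3/a$3) *s a" unfolding vec3_eq using 3 e by (auto simp: field_simps)
    then show ?thesis by blast
  qed
qed

lemma dt_scale: "dt a (c *s x) = c * dt a x" "dt (c *s a) x = c * dt a x"
  by (simp_all add: dt3 algebra_simps)

lemma in_pt: "v \<in> proj_pt v"
  unfolding proj_pt_def by (rule CollectI, rule exI[of _ 1]) simp

lemma mem_line: assumes "v \<noteq> 0" shows "proj_pt v \<in> proj_line a \<longleftrightarrow> dt a v = 0"
proof -
  have "proj_pt v \<in> proj_points" using assms unfolding proj_points_def by blast
  moreover have "(\<forall>x\<in>proj_pt v. dt a x = 0) \<longleftrightarrow> dt a v = 0"
    using in_pt[of v] by (auto simp: proj_pt_def dt_scale)
  ultimately show ?thesis unfolding proj_line_def dt_def by auto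
qed

lemma pt_scale: assumes "c \<noteq> 0" shows "proj_pt (c *s v) = proj_pt v"
proof -
  have "d *s v \<in> proj_pt (c *s v)" for d
    unfolding proj_pt_def using assms by (auto intro!: exI[of _ "d/c"])
  moreover have "d *s (c *s v) \<in> proj_pt v" for d
    unfolding proj_pt_def by (auto intro!: exI[of _ "d*c"])
  ultimately show ?thesis unfolding proj_pt_def by blast
qed

lemma line_scale: assumes "c \<noteq> 0" shows "proj_line (c *s a) = proj_line a"
  using assms unfolding proj_line_def dt_def[symmetric] by (auto simp: dt_scale)

lemma points_pt: "P \<in> proj_points \<Longrightarrow> \<exists>v. v \<noteq> 0 \<and> P = proj_pt v"
  unfolding proj_points_def by blast

lemma line_points: "P \<in> proj_line a \<Longrightarrow> P \<in> proj_points"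
  unfolding proj_line_def by blast

lemma line_par_eq: assumes "a \<noteq> 0" "b \<noteq> 0" "cr a b = 0" shows "proj_line b = proj_line a"
proof -
  obtain c where c: "b = c *s a" using cr0_par assms by blast
  with assms have "c \<noteq> 0" by auto
  then show ?thesis using c line_scale by simp
qed

lemma uniq:
  assumes "is_line L1" "is_line L2" "P \<in> L1" "P \<in> L2" "Q \<in> L1" "Q \<in> L2" "P \<noteq> Q"
  shows "L1 = L2"
proof -
  obtain a where a: "a \<noteq> 0" "L1 = proj_line a" using assms(1) is_line_def by blast
  obtain b where b: "b \<noteq> 0" "L2 = proj_line b" using assms(2) is_line_def by blast
  obtain v where v: "v \<noteq> 0" "P = proj_pt v" using assms(3) a line_points points_pt by blast
  obtain w where w: "w \<noteq> 0" "Q = proj_pt w" using assms(5) a line_points points_pt by blast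
  have da: "dt a v = 0" "dt a w = 0" "dt b v = 0" "dt b w = 0"
    using assms a b v w mem_line by auto
  have "cr v w \<noteq> 0"
  proof
    assume "cr v w = 0"
    then obtain c where c: "w = c *s v" using cr0_par v by blast
    with w have "c \<noteq> 0" by auto
    then have "Q = P" using c v w pt_scale by simp
    then show False using assms by simp
  qed
  then have "proj_line a = proj_line (cr v w)" "proj_line b = proj_line (cr v w)"
    using line_par_eq cr_cr da a b by blast+
  then show ?thesis using a b by simp
qed

lemma meet:
  assumes "is_line L1" "is_line L2" "L1 \<noteq> L2" shows "\<exists>r. L1 \<inter> L2 = {r}"
proof -
  obtain a where a: "a \<noteq> 0" "L1 = proj_line a" using assms(1) is_line_def by blast
  obtain b where b: "b \<noteq> 0" "L2 = proj_line b" using assms(2) is_line_def by blast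
  have nz: "cr a b \<noteq> 0" using line_par_eq a b assms(3) by metis
  have r: "proj_pt (cr a b) \<in> L1 \<inter> L2" using mem_line[OF nz] dt_cr a b by simp
  show ?thesis
    apply (rule exI[of _ "proj_pt (cr a b)"])
    using r uniq[OF assms(1,2)] assms(3) by blast
qed


lemma nine:
  assumes X: "\<forall>H\<in>X. is_line H \<and> P \<in> H \<and> Q \<notin> H"
    and Y: "\<forall>K\<in>Y. is_line K \<and> Q \<in> K \<and> P \<notin> K" and f: "finite X" "finite Y"
  shows "finite ((\<Union>X) \<inter> (\<Union>Y)) \<and> card ((\<Union>X) \<inter> (\<Union>Y)) = card X * card Y"
proof -
  define g where "g = (\<lambda>(H::ppoint set, K). the_elem (H \<inter> K))"
  have sing: "H \<inter> K = {g (H,K)}" if "H \<in> X" "K \<in> Y" for H K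
  proof -
    have "P \<in> H" "P \<notin> K" using X Y that by auto
    then have hk: "H \<noteq> K" by blast
    have l: "is_line H" "is_line K" using X Y that by auto
    obtain r where "H \<inter> K = {r}" using meet[OF l hk] by blast
    then show ?thesis unfolding g_def by simp
  qed
  have eq: "(\<Union>X) \<inter> (\<Union>Y) = g ` (X \<times> Y)"
  proof
    show "(\<Union>X) \<inter> (\<Union>Y) \<subseteq> g ` (X \<times> Y)"
    proof
      fix r assume "r \<in> (\<Union>X) \<inter> (\<Union>Y)"
      then obtain H K where hk: "H \<in> X" "K \<in> Y" "r \<in> H \<inter> K" by blast
      then have "r = g (H,K)" using sing[OF hk(1,2)] by simp
      then show "r \<in> g ` (X \<times> Y)" using hk by blast
    qed
    show "g ` (X \<times> Y) \<subseteq> (\<Union>X) \<inter> (\<Union>Y)"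
    proof
      fix r assume "r \<in> g ` (X \<times> Y)"
      then obtain H K where hk: "H \<in> X" "K \<in> Y" "r = g (H,K)" by blast
      then have "r \<in> H" "r \<in> K" using sing[OF hk(1,2)] by auto
      then show "r \<in> (\<Union>X) \<inter> (\<Union>Y)" using hk by blast
    qed
  qed
  have inj: "inj_on g (X \<times> Y)"
  proof (rule inj_onI, clarify)
    fix H K H' K' assume a: "H \<in> X" "K \<in> Y" "H' \<in> X" "K' \<in> Y" "g (H,K) = g (H',K')"
    define r where "r = g (H,K)"
    have s1: "H \<inter> K = {r}" using sing[OF a(1,2)] unfolding r_def .
    have s2: "H' \<inter> K' = {r}" using sing[OF a(3,4)] a(5) unfolding r_def by simp
    have r: "r \<in> H" "r \<in> K" "r \<in> H'" "r \<in> K'" using s1 s2 by auto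
    have x: "is_line H" "P \<in> H" "Q \<notin> H" "is_line H'" "P \<in> H'" "Q \<notin> H'" using X a by auto
    have y: "is_line K" "Q \<in> K" "P \<notin> K" "is_line K'" "Q \<in> K'" "P \<notin> K'" using Y a by auto
    show "H = H' \<and> K = K'"
    proof
      show "H = H'"
      proof (rule ccontr)
        assume "H \<noteq> H'"
        then have "r = P" using uniq[OF x(1) x(4) r(1) r(3) x(2) x(5)] by blast
        then show False using r(2) y(3) by simp
      qed
      show "K = K'"
      proof (rule ccontr)
        assume "K \<noteq> K'"
        then have "r = Q" using uniq[OF y(1) y(4) r(2) r(4) y(2) y(5)] by blast
        then show False using r(1) x(3) by simp
      qed
    qed
  qed
  have "card (g ` (X \<times> Y)) = card X * card Y"
    using card_image[OF inj] by (simp add: card_cartesian_product)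
  moreover have "finite (g ` (X \<times> Y))" using f by simp
  ultimately show ?thesis unfolding eq by simp
qed

lemma three: assumes "3 \<le> card S" shows "\<exists>x y z. x \<in> S \<and> y \<in> S \<and> z \<in> S \<and> x \<noteq> y \<and> y \<noteq> z \<and> x \<noteq> z"
proof -
  obtain T where "T \<subseteq> S" "card T = 3" using obtain_subset_with_card_n[OF assms] by metis
  then show ?thesis unfolding card_3_iff by blast
qed

lemma good:
  assumes A: "line_arrangement A"
    and p: "3 \<le> card {H\<in>A. P \<in> H \<and> Q \<notin> H}" and q: "3 \<le> card {K\<in>A. Q \<in> K \<and> P \<notin> K}"
  shows "\<exists>H1\<in>A. \<exists>H2\<in>A. \<exists>H3\<in>A. \<exists>H4\<in>A. \<exists>H5\<in>A. \<exists>H6\<in>A.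
           distinct [H1, H2, H3, H4, H5, H6] \<and>
           H1 \<inter> H2 \<inter> H3 \<noteq> {} \<and> H4 \<inter> H5 \<inter> H6 \<noteq> {} \<and>
           finite ((H1 \<union> H2 \<union> H3) \<inter> (H4 \<union> H5 \<union> H6)) \<and>
           card ((H1 \<union> H2 \<union> H3) \<inter> (H4 \<union> H5 \<union> H6)) = 9"
proof -
  obtain H1 H2 H3 where h: "H1 \<in> {H\<in>A. P \<in> H \<and> Q \<notin> H}" "H2 \<in> {H\<in>A. P \<in> H \<and> Q \<notin> H}"
     "H3 \<in> {H\<in>A. P \<in> H \<and> Q \<notin> H}" "H1 \<noteq> H2" "H2 \<noteq> H3" "H1 \<noteq> H3"
    using three[OF p] by blast
  obtain H4 H5 H6 where k: "H4 \<in> {K\<in>A. Q \<in> K \<and> P \<notin> K}" "H5 \<in> {K\<in>A. Q \<in> K \<and> P \<notin> K}"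
     "H6 \<in> {K\<in>A. Q \<in> K \<and> P \<notin> K}" "H4 \<noteq> H5" "H5 \<noteq> H6" "H4 \<noteq> H6"
    using three[OF q] by blast
  have L: "\<forall>H\<in>A. is_line H" using A line_arrangement_def by blast
  have n: "finite ((\<Union>{H1,H2,H3}) \<inter> (\<Union>{H4,H5,H6})) \<and>
     card ((\<Union>{H1,H2,H3}) \<inter> (\<Union>{H4,H5,H6})) = card {H1,H2,H3} * card {H4,H5,H6}"
    by (rule nine[of _ P Q]) (use h k L in auto)
  have c: "card {H1,H2,H3} = 3" "card {H4,H5,H6} = 3" using h k by auto
  have u: "\<Union>{H1,H2,H3} = H1 \<union> H2 \<union> H3" "\<Union>{H4,H5,H6} = H4 \<union> H5 \<union> H6" by auto
  have d: "distinct [H1, H2, H3, H4, H5, H6]" using h k by auto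
  have ne: "H1 \<inter> H2 \<inter> H3 \<noteq> {}" "H4 \<inter> H5 \<inter> H6 \<noteq> {}" using h k by auto
  have fin: "finite ((H1 \<union> H2 \<union> H3) \<inter> (H4 \<union> H5 \<union> H6))"
    and cd: "card ((H1 \<union> H2 \<union> H3) \<inter> (H4 \<union> H5 \<union> H6)) = 9"
    using n unfolding c u by simp_all
  have m: "H1 \<in> A" "H2 \<in> A" "H3 \<in> A" "H4 \<in> A" "H5 \<in> A" "H6 \<in> A" using h k by auto
  show ?thesis
    apply (rule bexI[OF _ m(1)], rule bexI[OF _ m(2)], rule bexI[OF _ m(3)])
    apply (rule bexI[OF _ m(4)], rule bexI[OF _ m(5)], rule bexI[OF _ m(6)])
    using d ne fin cd by blast
qed


lemma taut: "a \<or> b \<or> c \<Longrightarrow> a \<or> b \<or> c \<or> d" by blast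

theorem mainTheorem10:
  assumes "line_arrangement A"
    and "\<not> C_le3_simple A"
  shows "\<exists>H1\<in>A. \<exists>H2\<in>A. \<exists>H3\<in>A. \<exists>H4\<in>A. \<exists>H5\<in>A. \<exists>H6\<in>A.
           distinct [H1, H2, H3, H4, H5, H6] \<and>
           H1 \<inter> H2 \<inter> H3 \<noteq> {} \<and> H4 \<inter> H5 \<inter> H6 \<noteq> {} \<and>
           finite ((H1 \<union> H2 \<union> H3) \<inter> (H4 \<union> H5 \<union> H6)) \<and>
           card ((H1 \<union> H2 \<union> H3) \<inter> (H4 \<union> H5 \<union> H6)) = 9"
proof (rule ccontr)
  assume ng: "\<not> ?thesis"
  have G: "False" if "3 \<le> card {H\<in>A. P \<in> H \<and> Q \<notin> H}" "3 \<le> card {K\<in>A. Q \<in> K \<and> P \<notin> K}" for P Q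
    using ng good[OF assms(1) that] by (rule notE)
  have fA: "finite A" and L: "\<forall>H\<in>A. is_line H" using assms(1) line_arrangement_def by auto
  have cov: "cover_num A \<le> card S" if "S \<subseteq> A" "mult A \<subseteq> \<Union>S" for S
    unfolding cover_num_def by (rule Least_le) (use that in blast)
  have simp2: "C_le3_simple A" if "cover_num A \<le> 2"
  proof -
    have "of_type_C 0 A \<or> of_type_C 1 A \<or> of_type_C 2 A" unfolding of_type_C_def using that by arith
    then show ?thesis unfolding C_le3_simple_def by (rule taut)
  qed
  have deg: "card {H\<in>A. P \<in> H} \<le> card {H\<in>A. P \<in> H \<and> Q \<notin> H} + 1" if "P \<noteq> Q" for P Q
  proof -
    have one: "card {H\<in>A. P \<in> H \<and> Q \<in> H} \<le> 1"
    proof -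
      have "finite {H\<in>A. P \<in> H \<and> Q \<in> H}" using fA by simp
      moreover have "\<forall>a1\<in>{H\<in>A. P \<in> H \<and> Q \<in> H}. \<forall>a2\<in>{H\<in>A. P \<in> H \<and> Q \<in> H}. a1 = a2"
      proof (intro ballI)
        fix a1 a2 assume a: "a1 \<in> {H\<in>A. P \<in> H \<and> Q \<in> H}" "a2 \<in> {H\<in>A. P \<in> H \<and> Q \<in> H}"
        then have "is_line a1" "is_line a2" "P \<in> a1" "P \<in> a2" "Q \<in> a1" "Q \<in> a2" using L by auto
        then show "a1 = a2" by (rule uniq[OF _ _ _ _ _ _ that])
      qed
      ultimately show ?thesis by (simp add: card_le_Suc0_iff_eq)
    qed
    have "{H\<in>A. P \<in> H} = {H\<in>A. P \<in> H \<and> Q \<notin> H} \<union> {H\<in>A. P \<in> H \<and> Q \<in> H}" by auto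
    then have "card {H\<in>A. P \<in> H} \<le> card {H\<in>A. P \<in> H \<and> Q \<notin> H} + card {H\<in>A. P \<in> H \<and> Q \<in> H}"
      using card_Un_le[of "{H\<in>A. P \<in> H \<and> Q \<notin> H}" "{H\<in>A. P \<in> H \<and> Q \<in> H}"] by simp
    then show ?thesis using one by linarith
  qed
  have mc: "3 \<le> card {H\<in>A. P \<in> H}" if "P \<in> mult A" for P
    using that unfolding mult_def by simp
  have "C_le3_simple A"
  proof -
    consider "mult A = {}" | "\<exists>P\<in>mult A. card {H\<in>A. P \<in> H} = 3"
      | "mult A \<noteq> {}" "\<forall>P\<in>mult A. card {H\<in>A. P \<in> H} \<noteq> 3" by blast
    then show ?thesis
    proof cases
      case 1
      then have "cover_num A \<le> card ({}::ppoint set set)" using cov by blast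
      then show ?thesis using simp2 by simp
    next
      case 2
      then obtain P where P: "P \<in> mult A" "card {H\<in>A. P \<in> H} = 3" by blast
      define T where "T = {H\<in>A. P \<in> H}"
      obtain H1 H2 H3 where T3: "T = {H1,H2,H3}" "H1 \<noteq> H2" "H2 \<noteq> H3" "H1 \<noteq> H3"
        using P(2) unfolding T_def[symmetric] card_3_iff by blast
      have PT: "P \<in> H1" "P \<in> H2" "P \<in> H3" "H1 \<in> A" "H2 \<in> A" "H3 \<in> A"
        using T3(1) unfolding T_def by blast+
      have sub: "mult A \<subseteq> \<Union>T"
      proof
        fix Q assume Q: "Q \<in> mult A"
        show "Q \<in> \<Union>T"
        proof (rule ccontr)
          assume nQ: "Q \<notin> \<Union>T"
          have e1: "{H\<in>A. P \<in> H \<and> Q \<notin> H} = T" using nQ unfolding T_def by blast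
          have e2: "{K\<in>A. Q \<in> K \<and> P \<notin> K} = {K\<in>A. Q \<in> K}" using nQ unfolding T_def by blast
          show False using G[of P Q] e1 e2 P(2) mc[OF Q] unfolding T_def by simp
        qed
      qed
      have "cover_num A \<le> 3" using cov[of T] sub P(2) unfolding T_def by auto
      moreover
      have "C_le3_simple A" if "cover_num A = 3"
        unfolding C_le3_simple_def of_type_C_def
        apply (rule disjI2, rule disjI2, rule disjI2, rule conjI[OF that])
        apply (rule bexI[OF _ PT(4)], rule bexI[OF _ PT(5)], rule bexI[OF _ PT(6)])
        using sub T3(1) PT by auto
      ultimately show ?thesis using simp2 by linarith
    next
      case 3
      then obtain P where P: "P \<in> mult A" by blast
      show ?thesis
      proof (cases "mult A \<subseteq> {P}")
        case True
        have "{H\<in>A. P \<in> H} \<noteq> {}" using mc[OF P] by (metis card.empty not_numeral_le_zero)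
        then obtain H where H: "H \<in> A" "P \<in> H" by blast
        have "cover_num A \<le> card {H}" using cov[of "{H}"] H True by blast
        then show ?thesis using simp2 by simp
      next
        case False
        then obtain Q where Q: "Q \<in> mult A" "Q \<noteq> P" by blast
        have "4 \<le> card {H\<in>A. P \<in> H}" "4 \<le> card {H\<in>A. Q \<in> H}"
        proof -
          have "card {H\<in>A. P \<in> H} \<noteq> 3" "card {H\<in>A. Q \<in> H} \<noteq> 3" using 3(2) P Q(1) by auto
          then show "4 \<le> card {H\<in>A. P \<in> H}" "4 \<le> card {H\<in>A. Q \<in> H}"
            using mc[OF P] mc[OF Q(1)] by linarith+
        qed
        moreover have "card {H\<in>A. P \<in> H} \<le> card {H\<in>A. P \<in> H \<and> Q \<notin> H} + 1"
          "card {H\<in>A. Q \<in> H} \<le> card {H\<in>A. Q \<in> H \<and> P \<notin> H} + 1"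
          using deg Q(2) by auto
        ultimately have "3 \<le> card {H\<in>A. P \<in> H \<and> Q \<notin> H}" "3 \<le> card {K\<in>A. Q \<in> K \<and> P \<notin> K}"
          by linarith+
        then show ?thesis using G[of P Q] by blast
      qed
    qed
  qed
  then show False using assms(2) by blast
qed

end
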